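(* For all integers $n\ge 2$ and $0\le m\le n(n-1)$, the algebraic connectivity of $\mathbb G(n,m)$ equals $\lfloor \frac{m}{n-1}\rfloor$.
   Context: For integers $n\ge2$ and $0\le m\le n(n-1)$, $\mathbb G(n,m)$ is the simple directed graph on vertex set $\{1,\dots,n\}$ whose arc set is $\{(\lceil \frac{i}{n-1}\rceil,\ n-((i-1)\bmod n)) : i=1,\dots,m\}$, where an arc $(j,k)$ goes from $j$ to $k$ and $a\bmod b\in\{0,\dots,b-1\}$ is the remainder; these $m$ pairs are pairwise distinct pairs of distinct vertices (equivalently, $\mathbb G(n,0)$ is empty and $\mathbb G(n,m)$ is obtained from $\mathbb G(n,m-1)$ by adding the arc $(\lceil \frac{m}{n-1}\rceil, n-((m-1)\bmod n))$). The (in-degree) Laplacian of a directed graph is $L=D-A$, $D$ the diagonal matrix of in-degrees, $A_{ij}=1$ if $(j,i)$ is an arc and $0$ otherwise. The algebraic connectivity is the second smallest real part among the $n$ eigenvalues of $L$ counted with algebraic multiplicity. *)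

theory Defs
  imports "Jordan_Normal_Form.Char_Poly" "HOL-Computational_Algebra.Fundamental_Theorem_Algebra"
    "HOL-Library.Multiset"
begin

text \<open>Arc set of the digraph G(n,m) on vertex set {1..n}; an arc (j,k) goes from j to k.\<close>
definition G_arcs :: "nat \<Rightarrow> nat \<Rightarrow> (nat \<times> nat) set" where
  "G_arcs n m = (\<lambda>i. (nat \<lceil>real i / real (n - 1)\<rceil>, n - ((i - 1) mod n))) ` {1..m}"

definition in_degree :: "(nat \<times> nat) set \<Rightarrow> nat \<Rightarrow> nat" where
  "in_degree E v = card {u. (u, v) \<in> E}"

text \<open>In-degree Laplacian L = D - A (A_ij = 1 iff (j,i) is an arc), as an n x n complex
  matrix; row/column index r (0-based) corresponds to vertex r+1.\<close>
definition laplacian :: "nat \<Rightarrow> (nat \<times> nat) set \<Rightarrow> complex mat" where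
  "laplacian n E = mat n n (\<lambda>(r, c).
      (if r = c then of_nat (in_degree E (r + 1)) else 0)
      - (if (c + 1, r + 1) \<in> E then 1 else 0))"

definition eigenvalues_mset :: "complex mat \<Rightarrow> complex multiset" where
  "eigenvalues_mset A = proots (char_poly A)"

definition algebraic_connectivity :: "nat \<Rightarrow> (nat \<times> nat) set \<Rightarrow> real" where
  "algebraic_connectivity n E =
     sorted_list_of_multiset (image_mset Re (eigenvalues_mset (laplacian n E))) ! 1"

end

theory Submission
  imports Defs
begin


lemma ceil_lem:
  assumes "n \<ge> 2" "i \<ge> 1"
  shows "nat \<lceil>real i / real (n - 1)\<rceil> = (i - 1) div (n - 1) + 1"
proof -
  define a where "a = (i - 1) div (n - 1)"
  define s where "s = (i - 1) mod (n - 1)"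
  have i: "i = (n-1)*a + s + 1" using assms unfolding a_def s_def by simp
  have s: "s < n - 1" using assms unfolding s_def by simp
  have np: "real (n-1) > 0" using assms by simp
  have "real i / real (n-1) = real a + real (s+1) / real (n-1)"
    using np i by (simp add: field_simps)
  moreover have "real (s+1) / real (n-1) \<le> 1" "real (s+1) / real (n-1) > 0"
    using s np by (simp_all add: field_simps)
  ultimately have "\<lceil>real i / real (n - 1)\<rceil> = int a + 1"
    by (subst ceiling_eq_iff) auto
  then show ?thesis unfolding a_def by simp
qed

lemma arcs_iff:
  assumes "n \<ge> 2"
  shows "(a,b) \<in> G_arcs n m \<longleftrightarrow> (\<exists>k<m. a = k div (n-1) + 1 \<and> b = n - k mod n)"
proof
  assume "(a,b) \<in> G_arcs n m"
  then obtain i where i: "i \<in> {1..m}" "a = nat \<lceil>real i / real (n - 1)\<rceil>" "b = n - ((i - 1) mod n)"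
    unfolding G_arcs_def by auto
  then show "\<exists>k<m. a = k div (n-1) + 1 \<and> b = n - k mod n"
    using ceil_lem[OF assms, of i] by (intro exI[of _ "i - 1"]) auto
next
  assume "\<exists>k<m. a = k div (n-1) + 1 \<and> b = n - k mod n"
  then obtain k where k: "k < m" "a = k div (n-1) + 1" "b = n - k mod n" by blast
  have "Suc k \<in> {1..m}" using k by auto
  moreover have "(a,b) = (nat \<lceil>real (Suc k) / real (n - 1)\<rceil>, n - ((Suc k - 1) mod n))"
    using k ceil_lem[OF assms, of "Suc k"] by simp
  ultimately show "(a,b) \<in> G_arcs n m" unfolding G_arcs_def by blast
qed

lemma key_mod:
  fixes n c s :: nat
  assumes "n \<ge> 1" "s < n"
  shows "((c*(n-1)+s) mod n + c) mod n = s"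
proof -
  have "(c*(n-1)+s) + c = c*n + s" using assms by (cases n) (auto simp: algebra_simps)
  then have "((c*(n-1)+s) mod n + c) mod n = (c*n+s) mod n" by (metis mod_add_left_eq)
  also have "\<dots> = s" using assms by simp
  finally show ?thesis .
qed

lemma nat_mod_cancel:
  fixes a b c n :: nat
  assumes "(a + c) mod n = (b + c) mod n"
  shows "a mod n = b mod n"
proof -
  have h: "(int a + int c) mod int n = (int b + int c) mod int n"
    using assms by (metis of_nat_add zmod_int)
  have "int a mod int n = ((int a + int c) mod int n - int c) mod int n"
    by (simp add: mod_diff_left_eq)
  also have "\<dots> = ((int b + int c) mod int n - int c) mod int n" using h by simp
  also have "\<dots> = int b mod int n" by (simp add: mod_diff_left_eq)
  finally show ?thesis by (metis of_nat_eq_iff zmod_int)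
qed

lemma arc_cr:
  assumes "n \<ge> 2" "r < n" "c < n"
  shows "(Suc c, Suc r) \<in> G_arcs n m \<longleftrightarrow> r \<noteq> c \<and> c*(n-1) + (n-1-r+c) mod n < m"
proof
  assume "(Suc c, Suc r) \<in> G_arcs n m"
  then obtain k where k: "k < m" "Suc c = k div (n-1) + 1" "Suc r = n - k mod n"
    using arcs_iff[OF assms(1)] by blast
  define s where "s = k mod (n-1)"
  have ks: "k = c*(n-1) + s" using k(2) unfolding s_def by (metis add_right_cancel div_mult_mod_eq Suc_eq_plus1)
  have s: "s < n - 1" using assms unfolding s_def by simp
  have km: "k mod n < n" using assms by simp
  have r: "r = n - 1 - k mod n" using k(3) km by simp
  have "n-1-r+c = k mod n + c" using r km by simp
  then have sig: "(n-1-r+c) mod n = s" using key_mod[of n s c] ks s assms by simp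
  show "r \<noteq> c \<and> c*(n-1) + (n-1-r+c) mod n < m"
  proof
    show "r \<noteq> c"
    proof
      assume "r = c"
      then have "(n-1-r+c) mod n = n - 1" using assms by simp
      then show False using sig s by simp
    qed
    show "c*(n-1) + (n-1-r+c) mod n < m" using sig ks k by simp
  qed
next
  assume a: "r \<noteq> c \<and> c*(n-1) + (n-1-r+c) mod n < m"
  define s where "s = (n-1-r+c) mod n"
  have sn: "s < n" using assms unfolding s_def by simp
  have s: "s < n - 1"
  proof (rule ccontr)
    assume "\<not> s < n - 1"
    then have "s = n - 1" using sn by simp
    then have "(n-1-r+c) mod n = n - 1" unfolding s_def .
    moreover have "n-1-r+c < 2*n - 1" using assms by simp
    ultimately have "n-1-r+c = n - 1" using assms
    proof (cases "n-1-r+c < n")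
      case False
      then have "(n-1-r+c) mod n = (n-1-r+c-n) mod n" by (simp add: le_mod_geq)
      also have "\<dots> = n-1-r+c-n" using \<open>n-1-r+c < 2*n - 1\<close> by (intro mod_less) simp
      finally show ?thesis using \<open>(n-1-r+c) mod n = n - 1\<close> \<open>n-1-r+c < 2*n - 1\<close> by simp
    qed simp
    then have "r = c" using assms by arith
    then show False using a by simp
  qed
  define k where "k = c*(n-1) + s"
  have km: "k < m" using a unfolding k_def s_def by simp
  have kd: "k div (n-1) = c" using s unfolding k_def by simp
  have e1: "(k mod n + c) mod n = s" using key_mod[of n s c] s assms unfolding k_def by simp
  have "(k mod n + c) mod n = ((n-1-r) + c) mod n" using e1 unfolding s_def using assms by simp
  then have "(k mod n + c) mod n = ((n-1-r) + c) mod n" .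
  then have "(k mod n) mod n = (n-1-r) mod n" by (rule nat_mod_cancel)
  then have "k mod n = n-1-r" using assms by simp
  then have "Suc r = n - k mod n" using assms by simp
  then show "(Suc c, Suc r) \<in> G_arcs n m"
    using arcs_iff[OF assms(1)] km kd by auto
qed



lemma sig_lt:
  fixes n r c :: nat
  assumes "n \<ge> 2" "r < n" "c < n" "r \<noteq> c"
  shows "(n-1-r+c) mod n < n - 1"
proof -
  have sn: "(n-1-r+c) mod n < n" using assms by simp
  show ?thesis
  proof (rule ccontr)
    assume "\<not> (n-1-r+c) mod n < n - 1"
    then have e: "(n-1-r+c) mod n = n - 1" using sn by simp
    have b: "n-1-r+c < 2*n - 1" using assms by simp
    have "n-1-r+c = n - 1"
    proof (cases "n-1-r+c < n")
      case False
      then have "(n-1-r+c) mod n = (n-1-r+c-n) mod n" by (simp add: le_mod_geq)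
      also have "\<dots> = n-1-r+c-n" using b by (intro mod_less) simp
      finally show ?thesis using e b by simp
    qed (use e in simp)
    then have "r = c" using assms by arith
    then show False using assms by simp
  qed
qed

lemma arc_struct:
  assumes "n \<ge> 2" "r < n" "c < n" "q = m div (n-1)"
  shows "(Suc c, Suc r) \<in> G_arcs n m \<longleftrightarrow> r \<noteq> c \<and> (c < q \<or> (c = q \<and> (Suc q, Suc r) \<in> G_arcs n m))"
proof -
  have qm: "q*(n-1) \<le> m" using assms(4) using div_times_less_eq_dividend by simp
  have m1: "m = q*(n-1) + m mod (n-1)" using assms(4) div_mult_mod_eq[of m "n-1"] by simp
  have m2: "m mod (n-1) < n-1" using assms(1) by simp
  have m3: "(q+1)*(n-1) = q*(n-1) + (n-1)" by simp
  have mq: "m < (q+1)*(n-1)" using m1 m2 m3 by linarith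
  consider "c < q" | "c = q" | "c > q" by linarith
  then show ?thesis
  proof cases
    case 1
    show ?thesis
    proof (cases "r = c")
      case False
      have "(n-1-r+c) mod n < n - 1" using sig_lt assms False by blast
      then have "c*(n-1) + (n-1-r+c) mod n < (c+1)*(n-1)" by simp
      also have "\<dots> \<le> q*(n-1)" using 1 by (intro mult_right_mono) auto
      finally show ?thesis using arc_cr[OF assms(1-3), of m] qm 1 False by simp
    qed (use arc_cr[OF assms(1-3), of m] in simp)
  next
    case 2 then show ?thesis using arc_cr[OF assms(1-3), of m] by auto
  next
    case 3
    have "(q+1)*(n-1) \<le> c*(n-1)" using 3 by (intro mult_right_mono) auto
    then show ?thesis using arc_cr[OF assms(1-3), of m] mq 3 by auto
  qed
qed




lemma indeg_eq:
  assumes "n \<ge> 2" "m \<le> n*(n-1)" "r < n"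
  shows "in_degree (G_arcs n m) (Suc r) = card {c. c < n \<and> (Suc c, Suc r) \<in> G_arcs n m}"
proof -
  have "{u. (u, Suc r) \<in> G_arcs n m} = Suc ` {c. c < n \<and> (Suc c, Suc r) \<in> G_arcs n m}"
  proof (intro Set.set_eqI iffI)
    fix u assume "u \<in> {u. (u, Suc r) \<in> G_arcs n m}"
    then have u: "(u, Suc r) \<in> G_arcs n m" by simp
    then obtain k where k: "k < m" "u = k div (n-1) + 1" using arcs_iff[OF assms(1)] by blast
    have "k < n * (n-1)" using k assms by simp
    then have "k div (n-1) < n" using assms by (simp add: less_mult_imp_div_less)
    then show "u \<in> Suc ` {c. c < n \<and> (Suc c, Suc r) \<in> G_arcs n m}" using k u by auto
  qed auto
  then show ?thesis unfolding in_degree_def by (simp add: card_image)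
qed

lemma card_in:
  assumes "n \<ge> 2" "m \<le> n*(n-1)" "r < n" "q = m div (n-1)"
  shows "card {c. c < n \<and> (Suc c, Suc r) \<in> G_arcs n m} =
     q - (if r < q then 1 else 0) + (if q < n \<and> (Suc q, Suc r) \<in> G_arcs n m then 1 else 0)"
proof -
  have "q \<le> (n*(n-1)) div (n-1)" using assms(2,4) div_le_mono by blast
  then have qn: "q \<le> n" using assms(1) by simp
  have qr: "(Suc q, Suc r) \<in> G_arcs n m \<Longrightarrow> q < n \<Longrightarrow> r \<noteq> q" using arc_cr assms by blast
  define X where "X = ((Suc q, Suc r) \<in> G_arcs n m)"
  have st: "(Suc c, Suc r) \<in> G_arcs n m \<longleftrightarrow> r \<noteq> c \<and> (c < q \<or> (c = q \<and> X))" if "c < n" for c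
    unfolding X_def by (rule arc_struct[OF assms(1,3) that assms(4)])
  have qr': "X \<Longrightarrow> q < n \<Longrightarrow> r \<noteq> q" using qr unfolding X_def .
  have "{c. c < n \<and> (Suc c, Suc r) \<in> G_arcs n m} =
     ({..<q} - {r}) \<union> (if q < n \<and> X then {q} else {})"
  proof (intro Set.set_eqI)
    fix c
    show "c \<in> {c. c < n \<and> (Suc c, Suc r) \<in> G_arcs n m} \<longleftrightarrow> c \<in> ({..<q} - {r}) \<union> (if q < n \<and> X then {q} else {})"
    proof (cases "c < n")
      case True
      then show ?thesis using st[OF True] qr' by auto
    next
      case False
      then show ?thesis using qn by auto
    qed
  qed
  moreover have "card ({..<q} - {r}) = q - (if r < q then 1 else 0)" by simp
  ultimately show ?thesis unfolding X_def[symmetric] by (simp add: card_Un_disjoint)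
qed




lemma mult_mat_entry:
  "i < n \<Longrightarrow> j < n \<Longrightarrow> (mat n n f * mat n n g) $$ (i,j) = (\<Sum>k<n. f (i,k) * g (k,j))"
  by (simp add: scalar_prod_def lessThan_atLeast0)

lemma second_smallest:
  fixes g :: "nat \<Rightarrow> real"
  assumes "p < n" "jz < n" "jz \<noteq> p" "g p = 0" "g jz = x" "\<And>i. i < n \<Longrightarrow> i \<noteq> p \<Longrightarrow> g i \<ge> x" "x \<ge> 0"
  shows "sorted_list_of_multiset (mset (map g [0..<n])) ! 1 = x"
proof -
  define N where "N = image_mset g (mset_set ({0..<n} - {p}))"
  have "mset (map g [0..<n]) = image_mset g (mset_set {0..<n})" by (simp add: mset_upt)
  also have "mset_set {0..<n} = add_mset p (mset_set ({0..<n} - {p}))"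
    using assms(1) by (metis atLeastLessThan_iff finite_atLeastLessThan insert_absorb le0 mset_set.insert_remove)
  also have "image_mset g (add_mset p (mset_set ({0..<n} - {p}))) = add_mset 0 N" unfolding N_def using assms by simp
  finally have M: "mset (map g [0..<n]) = add_mset 0 N" .
  define zs where "zs = sorted_list_of_multiset N"
  have sz: "sorted zs" and setz: "set zs = set_mset N" unfolding zs_def by auto
  have xin: "x \<in> set zs" unfolding setz N_def using assms by auto
  have ge: "y \<ge> x" if "y \<in> set zs" for y
  proof -
    have sN: "set_mset N = g ` ({0..<n} - {p})" unfolding N_def by simp
    have "y \<in> g ` ({0..<n} - {p})" using that unfolding setz sN .
    then obtain i where "i \<in> {0..<n} - {p}" "y = g i" by blast
    then show ?thesis using assms(6) by auto
  qed
  obtain a zs' where z: "zs = a # zs'" using xin by (cases zs) auto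
  have "a \<ge> x" using ge z by auto
  moreover have "a \<le> x" using xin sz z by auto
  ultimately have ax: "a = x" by simp
  have "sorted_list_of_multiset (mset (map g [0..<n])) = insort 0 zs" unfolding M zs_def by simp
  also have "\<dots> = 0 # zs" using z ax assms(7) by simp
  finally show ?thesis using z ax by simp
qed





lemma mult_entry:
  assumes "A \<in> carrier_mat n n" "B \<in> carrier_mat n n" "i < n" "j < n"
  shows "(A * B) $$ (i,j) = (\<Sum>k<n. A $$ (i,k) * B $$ (k,j))"
  using assms by (simp add: scalar_prod_def lessThan_atLeast0)

lemma sum_list_singletons: "sum_list (map (\<lambda>a. {#a#}) xs) = mset xs"
  by (induction xs) auto

lemma proots_lin: "proots (\<Prod>a\<leftarrow>xs. [:- a, 1::'a::idom:]) = mset xs"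
proof (induction xs)
  case (Cons a xs)
  have nz: "(\<Prod>a\<leftarrow>xs. [:- a, 1::'a:]) \<noteq> 0" by (auto simp: prod_list_zero_iff)
  have "(\<Prod>a\<leftarrow>a # xs. [:- a, 1::'a:]) = [:- a, 1:] * (\<Prod>a\<leftarrow>xs. [:- a, 1::'a:])" by simp
  then have "proots (\<Prod>a\<leftarrow>a # xs. [:- a, 1::'a:]) = proots [:- a, 1:] + proots (\<Prod>a\<leftarrow>xs. [:- a, 1::'a:])"
    using proots_mult[OF _ nz, of "[:- a, 1:]"] by simp
  also have "proots [:- a, 1::'a:] = {#a#}" using proots_linear_factor[of "- a"] by simp
  finally show ?case using Cons by simp
qed simp

lemma sum_indicator:
  fixes n :: nat
  shows "(\<Sum>k<n. if P k then (1::complex) else 0) = of_nat (card {k. k < n \<and> P k})"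
proof -
  have "(\<Sum>k<n. if P k then (1::complex) else 0) = (\<Sum>k\<in>{k\<in>{..<n}. P k}. 1)"
    by (rule sum.inter_filter[symmetric]) simp
  also have "{k\<in>{..<n}. P k} = {k. k < n \<and> P k}" by auto
  finally have "(\<Sum>k<n. if P k then (1::complex) else 0) = (\<Sum>k\<in>{k. k < n \<and> P k}. 1)" .
  then show ?thesis by simp
qed

theorem theorem4:
  fixes n m :: nat
  assumes "n \<ge> 2" and "m \<le> n * (n - 1)"
  shows "algebraic_connectivity n (G_arcs n m) = of_int \<lfloor>real m / real (n - 1)\<rfloor>"
proof -
  note n2 = assms(1) and mb = assms(2)
  define q where "q = m div (n-1)"
  define p where "p = min q (n-1)"
  define A where "A = (\<lambda>c r. (Suc c, Suc r) \<in> G_arcs n m)"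
  define t where "t = (\<lambda>r. q < n \<and> A q r)"
  define L where "L = laplacian n (G_arcs n m)"
  define B :: "complex mat" where "B = mat n n (\<lambda>(i,j). if i = j then (if i = p then 0 else of_nat q + (if t i then 1 else 0))
      else if i = p \<and> j < q then -1 else 0)"
  define P :: "complex mat" where "P = mat n n (\<lambda>(k,j). if k = j then 1 else if j = p then 1 else 0)"
  define Q :: "complex mat" where "Q = mat n n (\<lambda>(k,j). if k = j then 1 else if j = p then -1 else 0)"
  have qn: "q \<le> n"
  proof -
    have "q \<le> (n*(n-1)) div (n-1)" using mb unfolding q_def using div_le_mono by blast
    then show ?thesis using n2 by simp
  qed
  have pn: "p < n" unfolding p_def using n2 by simp
  have cL: "L \<in> carrier_mat n n" and cB: "B \<in> carrier_mat n n" and cP: "P \<in> carrier_mat n n"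
    and cQ: "Q \<in> carrier_mat n n" unfolding L_def laplacian_def B_def P_def Q_def by auto
  have Lent: "L $$ (i,j) = (if i = j then of_nat (card {c. c < n \<and> A c i}) else 0) - (if A j i then 1 else 0)"
    if "i < n" "j < n" for i j
    unfolding L_def laplacian_def A_def using that indeg_eq[OF n2 mb] by simp
  have card: "card {c. c < n \<and> A c i} = q - (if i < q then 1 else 0) + (if t i then 1 else 0)" if "i < n" for i
    unfolding A_def t_def using card_in[OF n2 mb that q_def] by simp
  have Astr: "A c r \<longleftrightarrow> r \<noteq> c \<and> (c < q \<or> (c = q \<and> A q r))" if "c < n" "r < n" for c r
    unfolding A_def using arc_struct[OF n2 that(2,1) q_def] by simp
  have Aoff: "A j i \<longleftrightarrow> j < q" if "i < n" "j < n" "i \<noteq> j" "j \<noteq> p" for i j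
  proof (cases "q < n")
    case True
    then have "p = q" unfolding p_def by simp
    then show ?thesis using Astr[of j i] that by auto
  next
    case False
    then show ?thesis using Astr[of j i] that qn by auto
  qed
  have rowsum: "(\<Sum>k<n. L $$ (i,k)) = 0" if "i < n" for i
  proof -
    have "(\<Sum>k<n. L $$ (i,k)) = (\<Sum>k<n. (if k = i then of_nat (card {c. c < n \<and> A c i}) else 0) - (if A k i then 1 else 0))"
      using that by (intro sum.cong) (auto simp: Lent)
    also have "\<dots> = of_nat (card {c. c < n \<and> A c i}) - (\<Sum>k<n. if A k i then 1 else 0)"
      using that by (simp add: sum_subtractf)
    also have "\<dots> = 0" by (simp add: sum_indicator)
    finally show ?thesis .
  qed
  have Pent: "P $$ (k,j) = (if k = j then 1 else if j = p then 1 else 0)" if "k < n" "j < n" for k j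
    unfolding P_def using that by simp
  have Qent: "Q $$ (k,j) = (if k = j then 1 else if j = p then -1 else 0)" if "k < n" "j < n" for k j
    unfolding Q_def using that by simp
  have Bent: "B $$ (i,j) = (if i = j then (if i = p then 0 else of_nat q + (if t i then 1 else 0))
      else if i = p \<and> j < q then -1 else 0)" if "i < n" "j < n" for i j
    unfolding B_def using that by simp
  have Pleft: "(P * M) $$ (i,j) = M $$ (i,j) + (if i \<noteq> p then M $$ (p,j) else 0)"
    if "M \<in> carrier_mat n n" "i < n" "j < n" for M :: "complex mat" and i j
  proof -
    have "(P * M) $$ (i,j) = (\<Sum>k<n. P $$ (i,k) * M $$ (k,j))" using mult_entry[OF cP that(1-3)] .
    also have "\<dots> = (\<Sum>k<n. (if k = i then M $$ (k,j) else 0) + (if k = p then (if i \<noteq> p then M $$ (k,j) else 0) else 0))"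
      using that by (intro sum.cong) (auto simp: Pent)
    also have "\<dots> = M $$ (i,j) + (if i \<noteq> p then M $$ (p,j) else 0)"
      using that pn by (simp add: sum.distrib)
    finally show ?thesis .
  qed
  have Qleft: "(Q * M) $$ (i,j) = M $$ (i,j) - (if i \<noteq> p then M $$ (p,j) else 0)"
    if "M \<in> carrier_mat n n" "i < n" "j < n" for M :: "complex mat" and i j
  proof -
    have "(Q * M) $$ (i,j) = (\<Sum>k<n. Q $$ (i,k) * M $$ (k,j))" using mult_entry[OF cQ that(1-3)] .
    also have "\<dots> = (\<Sum>k<n. (if k = i then M $$ (k,j) else 0) - (if k = p then (if i \<noteq> p then M $$ (k,j) else 0) else 0))"
      using that by (intro sum.cong) (auto simp: Qent)
    also have "\<dots> = M $$ (i,j) - (if i \<noteq> p then M $$ (p,j) else 0)"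
      using that pn by (simp add: sum_subtractf)
    finally show ?thesis .
  qed
  have LP: "L * P = P * B"
  proof (rule eq_matI)
    fix i j assume ij: "i < dim_row (P * B)" "j < dim_col (P * B)"
    then have i: "i < n" and j: "j < n" using cP cB by auto
    have lhs: "(L * P) $$ (i,j) = (if j = p then 0 else L $$ (i,j))"
    proof (cases "j = p")
      case True
      have "(L * P) $$ (i,j) = (\<Sum>k<n. L $$ (i,k))"
        using mult_entry[OF cL cP i j] True i j by (simp add: Pent)
      then show ?thesis using rowsum[OF i] True by simp
    next
      case False
      have "(L * P) $$ (i,j) = (\<Sum>k<n. L $$ (i,k) * P $$ (k,j))" using mult_entry[OF cL cP i j] .
      also have "\<dots> = (\<Sum>k<n. if k = j then L $$ (i,k) else 0)"
        by (rule sum.cong) (use False i j in \<open>auto simp: Pent\<close>)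
      finally have "(L * P) $$ (i,j) = (\<Sum>k<n. if k = j then L $$ (i,k) else 0)" .
      then show ?thesis using False j by simp
    qed
    have rhs: "(P * B) $$ (i,j) = B $$ (i,j) + (if i \<noteq> p then B $$ (p,j) else 0)"
      using Pleft[OF cB i j] .
    show "(L * P) $$ (i,j) = (P * B) $$ (i,j)"
    proof (cases "j = p")
      case True
      then show ?thesis unfolding lhs rhs using i j pn by (simp add: Bent)
    next
      case False
      show ?thesis
      proof (cases "i = j")
        case True
        have nA: "\<not> A i i" using Astr[OF i i] by simp
        show ?thesis
        proof (cases "i < q")
          case iq: True
          then have q1: "q \<ge> 1" by simp
          have "of_nat (q - 1 + (if t i then 1 else 0)) = (of_nat q - 1 + (if t i then 1 else 0) :: complex)"
            using q1 by (simp add: of_nat_diff)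
          then show ?thesis unfolding lhs rhs using True False i j pn iq nA
            by (simp add: Bent Lent card)
        next
          case iq: False
          then show ?thesis unfolding lhs rhs using True False i j pn iq nA
            by (simp add: Bent Lent card)
        qed
      next
        case ne: False
        show ?thesis unfolding lhs rhs using ne False i j pn Aoff[OF i j ne False]
          by (simp add: Bent Lent)
      qed
    qed
  qed (use cP cB cL in auto)
  have PQ: "P * Q = 1\<^sub>m n"
  proof (rule eq_matI)
    fix i j assume "i < dim_row (1\<^sub>m n :: complex mat)" "j < dim_col (1\<^sub>m n :: complex mat)"
    then have i: "i < n" and j: "j < n" by auto
    show "(P * Q) $$ (i,j) = 1\<^sub>m n $$ (i,j)" using Pleft[OF cQ i j] i j pn by (simp add: Qent)
  qed (use cP cQ in auto)
  have QP: "Q * P = 1\<^sub>m n"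
  proof (rule eq_matI)
    fix i j assume "i < dim_row (1\<^sub>m n :: complex mat)" "j < dim_col (1\<^sub>m n :: complex mat)"
    then have i: "i < n" and j: "j < n" by auto
    show "(Q * P) $$ (i,j) = 1\<^sub>m n $$ (i,j)" using Qleft[OF cP i j] i j pn by (simp add: Pent)
  qed (use cP cQ in auto)
  have "L = L * (P * Q)" using cL PQ by simp
  also have "\<dots> = (L * P) * Q" using cL cP cQ by simp
  also have "\<dots> = P * B * Q" using LP by simp
  finally have LPBQ: "L = P * B * Q" .
  have sim: "similar_mat L B" by (rule similar_matI[OF _ PQ QP LPBQ]) (use cL cB cP cQ in auto)
  have cBT: "transpose_mat B \<in> carrier_mat n n" using cB by simp
  have ut: "upper_triangular (transpose_mat B)"
    unfolding upper_triangular_def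
  proof (intro allI impI)
    fix i j assume i: "i < dim_row (transpose_mat B)" and ji: "j < i"
    then have i': "i < n" using cB by simp
    have "\<not> (j = p \<and> i < q)" using ji i' unfolding p_def by auto
    have "transpose_mat B $$ (i,j) = B $$ (j,i)" using i' ji cB by simp
    then show "transpose_mat B $$ (i,j) = 0" using \<open>\<not> (j = p \<and> i < q)\<close> i' ji by (simp add: Bent)
  qed
  define dg where "dg = (\<lambda>i. B $$ (i,i))"
  have "char_poly L = char_poly B" using char_poly_similar[OF sim] .
  also have "\<dots> = char_poly (transpose_mat B)" using char_poly_transpose_mat[OF cB] by simp
  also have "\<dots> = (\<Prod>a\<leftarrow>diag_mat (transpose_mat B). [:- a, 1:])"
    using char_poly_upper_triangular[OF cBT ut] .
  also have "diag_mat (transpose_mat B) = map dg [0..<n]"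
    unfolding diag_mat_def dg_def using cB by auto
  finally have cp: "char_poly L = (\<Prod>a\<leftarrow>map dg [0..<n]. [:- a, 1:])" .
  have ev: "eigenvalues_mset L = mset (map dg [0..<n])"
    unfolding eigenvalues_mset_def cp
    by (rule proots_lin)
  define g where "g = (\<lambda>i. Re (dg i))"
  have gp: "g p = 0" unfolding g_def dg_def using pn by (simp add: Bent)
  have gi: "g i = real q + (if t i then 1 else 0)" if "i < n" "i \<noteq> p" for i
    unfolding g_def dg_def using that by (simp add: Bent)
  obtain j0 where j0: "j0 < n" "j0 \<noteq> p" "\<not> t j0"
  proof (cases "q < n")
    case False
    then have "p = n - 1" unfolding p_def using qn by simp
    then show ?thesis using that[of 0] n2 unfolding t_def using False by simp
  next
    case True
    define j where "j = (q+1) mod n"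
    have pq: "p = q" unfolding p_def using True by simp
    have jv: "j = (if q + 1 < n then q + 1 else 0)"
    proof (cases "q + 1 < n")
      case False
      then have "q + 1 = n" using True by simp
      then show ?thesis unfolding j_def using False by simp
    qed (simp add: j_def)
    have jn: "j < n" unfolding jv using n2 by simp
    have jp: "j \<noteq> p" unfolding pq jv using True n2 by auto
    have sig: "(n-1-j+q) mod n = n - 2"
    proof (cases "q + 1 < n")
      case True
      then have "j = q + 1" unfolding jv by simp
      then have "n-1-j+q = n - 2" using True by simp
      then show ?thesis using n2 by simp
    next
      case False
      then have qv: "q = n - 1" using \<open>q < n\<close> by simp
      have "j = 0" unfolding jv using False by simp
      then have e: "n-1-j+q = n + (n - 2)" using qv n2 by simp
      have "(n + (n - 2)) mod n = (n - 2) mod n" by (rule mod_add_self1)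
      also have "\<dots> = n - 2" using n2 by simp
      finally show ?thesis unfolding e .
    qed
    have m1: "m = q*(n-1) + m mod (n-1)" using q_def div_mult_mod_eq[of m "n-1"] by simp
    have m2: "m mod (n-1) < n-1" using n2 by simp
    have nl: "\<not> (q*(n-1) + (n-1-j+q) mod n < m)" unfolding sig using m1 m2 n2 by linarith
    have "\<not> A q j" unfolding A_def using arc_cr[OF n2 jn True, of m] nl by simp
    then show ?thesis using that[OF jn jp] unfolding t_def by simp
  qed
  have res: "sorted_list_of_multiset (mset (map g [0..<n])) ! 1 = real q"
    by (rule second_smallest[where g=g and p=p and jz=j0, OF pn j0(1,2) gp]) (use gi j0 in auto)
  have "algebraic_connectivity n (G_arcs n m) = sorted_list_of_multiset (mset (map g [0..<n])) ! 1"
  proof -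
    have im: "image_mset Re (mset (map dg xs)) = mset (map g xs)" for xs
      by (induction xs) (auto simp: g_def)
    show ?thesis unfolding algebraic_connectivity_def L_def[symmetric] ev im ..
  qed
  also have "\<dots> = real q" by (rule res)
  also have "\<dots> = of_int \<lfloor>real m / real (n - 1)\<rfloor>" unfolding q_def
    using floor_divide_of_nat_eq[where 'a=real, of m "n-1"] by simp
  finally show ?thesis .
qed


end
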